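(* Let $\mu\geq\nu>-1$ and $x\in(0,\alpha_{\nu,1})$. Then $$2^\mu\Gamma(\mu+1)x^{-\mu}d_\mu(x)\ \ge\ 2^\nu\Gamma(\nu+1)x^{-\nu}d_\nu(x),\quad\text{i.e.}\quad x^{\nu-\mu}\frac{d_\mu(x)}{d_\nu(x)}\geq 2^{\nu-\mu}\frac{\Gamma(\nu+1)}{\Gamma(\mu+1)},$$ and $$\frac{d_\mu'(x)}{d_\mu(x)}\geq\frac{d_\nu'(x)}{d_\nu(x)}.$$ Moreover, the function $x\mapsto d_\mu(x)/d_\nu(x)$ is increasing on $(0,\alpha_{\nu,1})$.
   Context: $J_\nu$ denotes the Bessel function of the first kind of order $\nu$. The Dini function is $d_\nu(x)=(1-\nu)J_\nu(x)+xJ_\nu'(x)$, and $\alpha_{\nu,1}$ denotes its first positive zero (one has $\alpha_{\nu,1}\le\alpha_{\mu,1}$ for $\mu\ge\nu>-1$). *)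

theory Defs
  imports "HOL-Analysis.Analysis"
begin

definition bessel_J :: "real \<Rightarrow> real \<Rightarrow> real" where
  "bessel_J nu x = (\<Sum>n. (-1) ^ n / (fact n * Gamma (real n + nu + 1)) * (x / 2) powr (2 * real n + nu))"

definition dini :: "real \<Rightarrow> real \<Rightarrow> real" where
  "dini nu x = (1 - nu) * bessel_J nu x + x * deriv (bessel_J nu) x"

definition dini_zero1 :: "real \<Rightarrow> real" where
  "dini_zero1 nu = Inf {x. 0 < x \<and> dini nu x = 0}"

end

theory Submission
  imports Defs
begin



fun cc :: "real \<Rightarrow> nat \<Rightarrow> real" where
  "cc nu 0 = 1"
| "cc nu (Suc n) = - cc nu n / (4 * (real n + 1) * (real n + nu + 1))"

lemma cc_summable:
  assumes "nu > -1"
  shows "summable (\<lambda>n. cc nu n * y ^ n)"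
proof (rule summable_ratio_test[where c="1/2" and N="nat \<lceil>\<bar>y\<bar>\<rceil> + 1"])
  fix n assume n: "n \<ge> nat \<lceil>\<bar>y\<bar>\<rceil> + 1"
  have n1: "real n \<ge> 1" using n by linarith
  have ny: "real n \<ge> \<bar>y\<bar>" using n by linarith
  have pos: "real n + nu + 1 > 0" using assms by linarith
  have big: "4 * (real n + 1) * (real n + nu + 1) \<ge> 2 * \<bar>y\<bar>"
  proof -
    have "4 * (real n + 1) * (real n + nu + 1) \<ge> 4 * 1 * (real n + nu + 1)"
      using pos n1 by (intro mult_right_mono) auto
    moreover have "4 * 1 * (real n + nu + 1) \<ge> 2 * \<bar>y\<bar>" using ny assms abs_ge_zero[of y] by (simp add: algebra_simps)
    ultimately show ?thesis by linarith
  qed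
  have d: "4 * (real n + 1) * (real n + nu + 1) > 0" using pos by simp
  have "norm (cc nu (Suc n) * y ^ Suc n) = \<bar>cc nu n\<bar> * \<bar>y\<bar>^n * (\<bar>y\<bar> / (4 * (real n + 1) * (real n + nu + 1)))"
    using d pos by (simp add: abs_mult power_abs abs_divide)
  also have "\<dots> \<le> \<bar>cc nu n\<bar> * \<bar>y\<bar>^n * (1/2)"
    using d big by (intro mult_left_mono) (auto simp: field_simps)
  finally show "norm (cc nu (Suc n) * y ^ Suc n) \<le> 1/2 * norm (cc nu n * y ^ n)"
    by (simp add: abs_mult power_abs mult.commute)
qed simp

definition G0 :: "real \<Rightarrow> real \<Rightarrow> real" where "G0 nu y = (\<Sum>n. cc nu n * y ^ n)"
definition G1 :: "real \<Rightarrow> real \<Rightarrow> real" where "G1 nu y = (\<Sum>n. diffs (cc nu) n * y ^ n)"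
definition G2 :: "real \<Rightarrow> real \<Rightarrow> real" where "G2 nu y = (\<Sum>n. diffs (diffs (cc nu)) n * y ^ n)"

lemma d1_summable: "nu > -1 \<Longrightarrow> summable (\<lambda>n. diffs (cc nu) n * y ^ n)"
  by (rule termdiff_converges_all) (rule cc_summable)
lemma d2_summable: "nu > -1 \<Longrightarrow> summable (\<lambda>n. diffs (diffs (cc nu)) n * y ^ n)"
  by (rule termdiff_converges_all) (rule d1_summable)

lemma G0_deriv: "nu > -1 \<Longrightarrow> (G0 nu has_real_derivative G1 nu y) (at y)"
  unfolding G0_def G1_def
  by (rule termdiffs_strong_converges_everywhere) (rule cc_summable)
lemma G1_deriv: "nu > -1 \<Longrightarrow> (G1 nu has_real_derivative G2 nu y) (at y)"
  unfolding G2_def G1_def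
  by (rule termdiffs_strong_converges_everywhere) (rule d1_summable)

lemma G0_0: "G0 nu 0 = 1"
  unfolding G0_def using suminf_finite[of "{0}" "\<lambda>n. cc nu n * 0 ^ n"] by simp
lemma G1_0: "G1 nu 0 = - 1 / (4 * (nu + 1))"
  unfolding G1_def using suminf_finite[of "{0}" "\<lambda>n. diffs (cc nu) n * 0 ^ n"] by (simp add: diffs_def)

lemma G_ode:
  assumes "nu > -1"
  shows "4 * y * G2 nu y + 4 * (nu + 1) * G1 nu y + G0 nu y = 0"
proof -
  let ?a = "\<lambda>n. diffs (diffs (cc nu)) n * y ^ n"
  have s2: "summable ?a" by (rule d2_summable[OF assms])
  have "(\<lambda>n. y * ?a n) sums (y * G2 nu y)" unfolding G2_def by (intro sums_mult summable_sums s2)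
  hence "(\<lambda>n. y * ?a (n)) sums (y * G2 nu y)" .
  have e: "(\<lambda>n. (real n + 1) * real n * cc nu (Suc n) * y ^ n) sums (y * G2 nu y)"
  proof -
    have "(\<lambda>n. y * ?a n) sums (y * G2 nu y)" unfolding G2_def by (intro sums_mult summable_sums s2)
    hence "(\<lambda>n. (\<lambda>m. (real m + 1) * real m * cc nu (Suc m) * y ^ m) (Suc n)) sums (y * G2 nu y)"
      by (simp add: diffs_def algebra_simps del: cc.simps)
    thus ?thesis using sums_Suc_iff[where f="\<lambda>m. (real m + 1) * real m * cc nu (Suc m) * y ^ m" and s="y * G2 nu y"] by (simp del: cc.simps)
  qed
  have f: "(\<lambda>n. (real n + 1) * cc nu (Suc n) * y ^ n) sums G1 nu y"
    unfolding G1_def using summable_sums[OF d1_summable[OF assms]] by (simp add: diffs_def add.commute del: cc.simps)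
  have g: "(\<lambda>n. cc nu n * y ^ n) sums G0 nu y"
    unfolding G0_def using summable_sums[OF cc_summable[OF assms]] .
  have "(\<lambda>n. 4 * ((real n + 1) * real n * cc nu (Suc n) * y ^ n) + 4 * (nu + 1) * ((real n + 1) * cc nu (Suc n) * y ^ n) + cc nu n * y ^ n)
      sums (4 * (y * G2 nu y) + 4 * (nu + 1) * G1 nu y + G0 nu y)"
    by (intro sums_add sums_mult e f g)
  note S = this
  have Z: "\<And>n. 4 * ((real n + 1) * real n * cc nu (Suc n) * y ^ n) + 4 * (nu + 1) * ((real n + 1) * cc nu (Suc n) * y ^ n) + cc nu n * y ^ n = 0"
  proof -
    fix n
    have pos: "real n + nu + 1 > 0" using assms by linarith
    have "4 * ((real n + 1) * real n * cc nu (Suc n)) + 4 * (nu + 1) * ((real n + 1) * cc nu (Suc n)) + cc nu n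
        = 4 * (real n + 1) * (real n + nu + 1) * cc nu (Suc n) + cc nu n" by (simp add: algebra_simps del: cc.simps)
    also have "\<dots> = 0"
    proof -
      have X: "4 * (real n + 1) * (real n + nu + 1) \<noteq> 0" using pos by simp
      have "4 * (real n + 1) * (real n + nu + 1) * cc nu (Suc n) = 4 * (real n + 1) * (real n + nu + 1) * (- cc nu n / (4 * (real n + 1) * (real n + nu + 1)))"
        by simp
      also have "\<dots> = - cc nu n" using X by simp
      finally show ?thesis by simp
    qed
    finally have E: "4 * ((real n + 1) * real n * cc nu (Suc n)) + 4 * (nu + 1) * ((real n + 1) * cc nu (Suc n)) + cc nu n = 0" .
    have "4 * ((real n + 1) * real n * cc nu (Suc n) * y ^ n) + 4 * (nu + 1) * ((real n + 1) * cc nu (Suc n) * y ^ n) + cc nu n * y ^ n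
      = (4 * ((real n + 1) * real n * cc nu (Suc n)) + 4 * (nu + 1) * ((real n + 1) * cc nu (Suc n)) + cc nu n) * y ^ n"
      by (simp only: distrib_right mult.assoc)
    with E show "4 * ((real n + 1) * real n * cc nu (Suc n) * y ^ n) + 4 * (nu + 1) * ((real n + 1) * cc nu (Suc n) * y ^ n) + cc nu n * y ^ n = 0"
      by simp
  qed
  have "(\<lambda>n::nat. 0::real) sums (4 * (y * G2 nu y) + 4 * (nu + 1) * G1 nu y + G0 nu y)"
    using S unfolding Z .
  from sums_unique2[OF this sums_zero] show ?thesis by (simp add: mult.assoc)
qed

lemma Gamma_step: fixes z :: real assumes "z > 0" shows "Gamma (z + 1) = z * Gamma z"
proof -
  have "z \<notin> \<int>\<^sub>\<le>\<^sub>0"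
  proof
    assume "z \<in> \<int>\<^sub>\<le>\<^sub>0" hence "z \<le> 0" by (rule nonpos_Ints_nonpos)
    with assms show False by simp
  qed
  thus ?thesis by (rule Gamma_plus1)
qed

lemma cc_Gamma:
  assumes "nu > -1"
  shows "cc nu n = (-1) ^ n * Gamma (nu + 1) / (fact n * Gamma (real n + nu + 1) * 4 ^ n)"
proof (induction n)
  case 0
  have "Gamma (nu + 1) > 0" using assms by simp
  thus ?case by simp
next
  case (Suc n)
  have p: "real n + nu + 1 > 0" using assms by linarith
  have g: "Gamma (real (Suc n) + nu + 1) = (real n + nu + 1) * Gamma (real n + nu + 1)"
    using Gamma_step[OF p] by (simp add: add_ac)
  have gp: "Gamma (real n + nu + 1) > 0" using p by simp
  show ?case using p gp unfolding cc.simps Suc g by (simp add: field_simps)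
qed

definition KK :: "real \<Rightarrow> real" where "KK nu = 1 / (2 powr nu * Gamma (nu + 1))"

lemma bessel_J_eq:
  assumes "nu > -1" "x > 0"
  shows "bessel_J nu x = KK nu * x powr nu * G0 nu (x^2)"
proof -
  have gp: "Gamma (nu + 1) > 0" using assms by simp
  have trm: "(-1) ^ n / (fact n * Gamma (real n + nu + 1)) * (x / 2) powr (2 * real n + nu)
      = (KK nu * x powr nu) * (cc nu n * (x^2) ^ n)" for n
  proof -
    have p: "real n + nu + 1 > 0" using assms by linarith
    have gp2: "Gamma (real n + nu + 1) > 0" using p by simp
    have "(x / 2) powr (2 * real n + nu) = (x/2) powr (real (2*n)) * (x / 2) powr nu"
      by (simp add: powr_add)
    also have "(x/2) powr (real (2*n)) = (x/2)^(2*n)" using assms by (simp only: powr_realpow)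
    also have "(x/2)^(2*n) = (x^2)^n / 4^n" by (simp add: power_mult power_divide)
    also have "(x / 2) powr nu = x powr nu / 2 powr nu" by (rule powr_divide)
    finally show ?thesis unfolding cc_Gamma[OF assms(1)] KK_def using gp gp2
      by (simp add: field_simps)
  qed
  have "(\<lambda>n. (KK nu * x powr nu) * (cc nu n * (x^2) ^ n)) sums ((KK nu * x powr nu) * G0 nu (x^2))"
    unfolding G0_def by (intro sums_mult summable_sums cc_summable assms)
  hence "(\<lambda>n. (-1) ^ n / (fact n * Gamma (real n + nu + 1)) * (x / 2) powr (2 * real n + nu)) sums ((KK nu * x powr nu) * G0 nu (x^2))"
    unfolding trm .
  thus ?thesis unfolding bessel_J_def by (simp add: sums_iff)
qed

lemma G0sq_deriv: "nu > -1 \<Longrightarrow> ((\<lambda>t. G0 nu (t^2)) has_real_derivative G1 nu (t^2) * (2 * t)) (at t)"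
  by (rule DERIV_chain2[OF G0_deriv]) (auto intro!: derivative_eq_intros)
lemma G1sq_deriv: "nu > -1 \<Longrightarrow> ((\<lambda>t. G1 nu (t^2)) has_real_derivative G2 nu (t^2) * (2 * t)) (at t)"
  by (rule DERIV_chain2[OF G1_deriv]) (auto intro!: derivative_eq_intros)

definition WW :: "real \<Rightarrow> real \<Rightarrow> real" where "WW nu t = G0 nu (t^2) + 2 * t^2 * G1 nu (t^2)"
definition W1 :: "real \<Rightarrow> real \<Rightarrow> real" where "W1 nu t = t * ((2 - 4 * nu) * G1 nu (t^2) - G0 nu (t^2))"

lemma WW_deriv:
  assumes "nu > -1"
  shows "(WW nu has_real_derivative W1 nu t) (at t)"
proof -
  have "(WW nu has_real_derivative (G1 nu (t^2) * (2 * t) + (2 * t^2 * (G2 nu (t^2) * (2 * t)) + 2 * (2 * t) * G1 nu (t^2)))) (at t)"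
    unfolding WW_def
    apply (rule DERIV_add[OF G0sq_deriv[OF assms]])
    apply (rule DERIV_mult'[OF _ G1sq_deriv[OF assms]])
    apply (auto intro!: derivative_eq_intros)
    done
  moreover have "G1 nu (t^2) * (2 * t) + (2 * t^2 * (G2 nu (t^2) * (2 * t)) + 2 * (2 * t) * G1 nu (t^2)) = W1 nu t"
  proof -
    have o: "4 * t^2 * G2 nu (t^2) = - 4 * (nu + 1) * G1 nu (t^2) - G0 nu (t^2)"
      using G_ode[OF assms, of "t^2"] by linarith
    have "G1 nu (t^2) * (2 * t) + (2 * t^2 * (G2 nu (t^2) * (2 * t)) + 2 * (2 * t) * G1 nu (t^2))
      = 6 * t * G1 nu (t^2) + t * (4 * t^2 * G2 nu (t^2))" by (simp add: algebra_simps)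
    also have "\<dots> = W1 nu t" unfolding o W1_def by (simp add: algebra_simps)
    finally show ?thesis .
  qed
  ultimately show ?thesis by simp
qed

lemma WW_cont: "nu > -1 \<Longrightarrow> continuous_on S (WW nu)"
  using WW_deriv by (meson DERIV_isCont continuous_at_imp_continuous_on)

lemma bessel_J_deriv:
  assumes "nu > -1" "x > 0"
  shows "(bessel_J nu has_real_derivative KK nu * (nu * x powr (nu - 1) * G0 nu (x^2) + x powr nu * (G1 nu (x^2) * (2 * x)))) (at x)"
proof -
  have "((\<lambda>t. KK nu * t powr nu * G0 nu (t^2)) has_real_derivative KK nu * (nu * x powr (nu - 1) * G0 nu (x^2) + x powr nu * (G1 nu (x^2) * (2 * x)))) (at x)"
    using assms by (auto intro!: derivative_eq_intros G0sq_deriv has_real_derivative_powr simp: algebra_simps)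
  thus ?thesis
    by (rule has_field_derivative_transform_within_open[where S="{0<..}"]) (use assms bessel_J_eq in auto)
qed

lemma dini_eq:
  assumes "nu > -1" "x > 0"
  shows "dini nu x = KK nu * x powr nu * WW nu x"
proof -
  have d: "deriv (bessel_J nu) x = KK nu * (nu * x powr (nu - 1) * G0 nu (x^2) + x powr nu * (G1 nu (x^2) * (2 * x)))"
    by (rule DERIV_imp_deriv[OF bessel_J_deriv[OF assms]])
  have e: "x * x powr (nu - 1) = x powr nu"
    using assms by (simp add: powr_diff field_simps)
  show ?thesis unfolding dini_def d bessel_J_eq[OF assms] WW_def
    by (simp add: algebra_simps e power2_eq_square)
qed

lemma dini_deriv:
  assumes "nu > -1" "x > 0"
  shows "deriv (dini nu) x = KK nu * (nu * x powr (nu - 1) * WW nu x + x powr nu * W1 nu x)"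
proof -
  have "((\<lambda>t. KK nu * t powr nu * WW nu t) has_real_derivative KK nu * (nu * x powr (nu - 1) * WW nu x + x powr nu * W1 nu x)) (at x)"
    using assms by (auto intro!: derivative_eq_intros WW_deriv has_real_derivative_powr simp: algebra_simps)
  hence "(dini nu has_real_derivative KK nu * (nu * x powr (nu - 1) * WW nu x + x powr nu * W1 nu x)) (at x)"
    by (rule has_field_derivative_transform_within_open[where S="{0<..}"]) (use assms dini_eq in auto)
  thus ?thesis by (rule DERIV_imp_deriv)
qed



lemma ric_alg:
  fixes a b t nu :: real
  assumes "t \<noteq> 0" "a + 2 * t^2 * b \<noteq> 0"
  shows "((a + (4*nu+2)*b) * (a + 2*t^2*b) - (-2*t*b) * (t * ((2 - 4*nu) * b - a))) / ((a + 2*t^2*b) * (a + 2*t^2*b))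
     = 1 + (2*t - (2*nu+1)/t) * (-2*t*b/(a + 2*t^2*b)) + (t^2 + 1 - 2*nu) * (-2*t*b/(a + 2*t^2*b))^2"
proof -
  define w where "w = a + 2 * t^2 * b"
  have aw: "a = w - 2 * t^2 * b" unfolding w_def by simp
  have w0: "w \<noteq> 0" using assms(2) unfolding w_def .
  show ?thesis unfolding w_def[symmetric] unfolding aw
    using w0 assms(1) by (simp add: field_simps power2_eq_square)
qed

lemma crossing0:
  fixes h h' :: "real \<Rightarrow> real"
  assumes Y: "Y > 0"
  and der: "\<And>t. 0 < t \<Longrightarrow> t < Y \<Longrightarrow> (h has_real_derivative h' t) (at t)"
  and near: "\<exists>e>0. \<forall>t. 0 < t \<and> t < e \<longrightarrow> h t > 0"
  and cross: "\<And>t. 0 < t \<Longrightarrow> t < Y \<Longrightarrow> h t = 0 \<Longrightarrow> h' t > 0"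
  shows "\<And>t. 0 < t \<Longrightarrow> t < Y \<Longrightarrow> h t > 0"
proof (rule ccontr)
  fix t0 assume t0: "0 < t0" "t0 < Y" "\<not> h t0 > 0"
  obtain e where e: "e > 0" "\<And>t. 0 < t \<Longrightarrow> t < e \<Longrightarrow> h t > 0" using near by blast
  define S where "S = {t. 0 < t \<and> t \<le> t0 \<and> h t \<le> 0}"
  have t0S: "t0 \<in> S" using t0 unfolding S_def by auto
  have bdd: "bdd_below S" unfolding S_def by (rule bdd_belowI[of _ 0]) auto
  define s where "s = Inf S"
  have sle: "s \<le> t0" unfolding s_def using cInf_lower[OF t0S bdd] .
  have Sge: "\<And>t. t \<in> S \<Longrightarrow> t \<ge> e"
  proof -
    fix t assume "t \<in> S" hence "0 < t" "h t \<le> 0" unfolding S_def by auto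
    thus "t \<ge> e" using e(2)[of t] by linarith
  qed
  have sge: "s \<ge> e" unfolding s_def by (rule cInf_greatest) (use t0S Sge in auto)
  have spos: "s > 0" using sge e by linarith
  have slt: "s < Y" using sle t0 by linarith
  have notbelow: "\<And>t. 0 < t \<Longrightarrow> t < s \<Longrightarrow> h t > 0"
  proof (rule ccontr)
    fix t assume "0 < t" "t < s" "\<not> h t > 0"
    hence "t \<in> S" using sle unfolding S_def by auto
    hence "s \<le> t" unfolding s_def using cInf_lower bdd by blast
    with \<open>t < s\<close> show False by simp
  qed
  have dh: "(h has_real_derivative h' s) (at s)" using der spos slt .
  have cont: "isCont h s" using DERIV_isCont[OF dh] .
  have hs_le: "h s \<le> 0"
  proof (rule ccontr)
    assume "\<not> h s \<le> 0" hence hp: "h s > 0" by simp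
    obtain d where d: "d > 0" "\<And>x. dist x s < d \<Longrightarrow> dist (h x) (h s) < h s"
      using cont hp unfolding continuous_at_eps_delta by blast
    have "Inf S < s + d" using d(1) unfolding s_def by simp
    hence "\<exists>t\<in>S. t < s + d" using cInf_less_iff[of S "s + d"] t0S bdd by blast
    then obtain t where t: "t \<in> S" "t < s + d" by blast
    have "s \<le> t" unfolding s_def using cInf_lower[OF t(1) bdd] .
    hence "dist t s < d" using t by (simp add: dist_real_def)
    hence "h t > 0" using d(2)[of t] hp by (simp add: dist_real_def abs_less_iff)
    with t show False unfolding S_def by auto
  qed
  have hs_ge: "h s \<ge> 0"
  proof (rule ccontr)
    assume "\<not> h s \<ge> 0" hence hn: "h s < 0" by simp
    obtain d where d: "d > 0" "\<And>x. dist x s < d \<Longrightarrow> dist (h x) (h s) < - h s"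
      using cont hn unfolding continuous_at_eps_delta by (metis neg_0_less_iff_less)
    define t where "t = s - min d s / 2"
    have "0 < t" "t < s" using d spos unfolding t_def by auto
    moreover have "dist t s < d" using d spos unfolding t_def by (simp add: dist_real_def)
    hence "h t < 0" using d(2)[of t] hn by (simp add: dist_real_def abs_less_iff)
    ultimately show False using notbelow by fastforce
  qed
  have "h s = 0" using hs_le hs_ge by simp
  hence "h' s > 0" using cross spos slt by blast
  then obtain d where d: "d > 0" "\<And>k. k > 0 \<Longrightarrow> k < d \<Longrightarrow> h (s - k) < h s"
    using DERIV_pos_inc_left[OF dh] by blast
  define k where "k = min d s / 2"
  have "k > 0" "k < d" "k < s" using d spos unfolding k_def by auto
  hence "h (s - k) < 0" using d(2) \<open>h s = 0\<close> by fastforce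
  moreover have "h (s - k) > 0" using notbelow \<open>k > 0\<close> \<open>k < s\<close> by simp
  ultimately show False by simp
qed

lemma near_pos:
  fixes f :: "real \<Rightarrow> real"
  assumes "isCont f 0" "f 0 > 0"
  shows "\<exists>e>0. \<forall>t. 0 < t \<and> t < e \<longrightarrow> t * f t > 0"
proof -
  obtain d where d: "d > 0" "\<And>x. dist x 0 < d \<Longrightarrow> dist (f x) (f 0) < f 0"
    using assms unfolding continuous_at_eps_delta by blast
  show ?thesis
  proof (intro exI[of _ d] conjI allI impI)
    fix t assume t: "0 < t \<and> t < d"
    hence "f t > 0" using d(2)[of t] by (simp add: dist_real_def abs_less_iff)
    thus "t * f t > 0" using t by simp
  qed (use d in auto)
qed



lemma crossing:
  fixes h h' :: "real \<Rightarrow> real"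
  assumes Y: "Y > 0"
  and der: "\<And>t. 0 < t \<Longrightarrow> t < Y \<Longrightarrow> (h has_real_derivative h' t) (at t)"
  and near: "\<exists>e>0. \<forall>t. 0 < t \<and> t < e \<longrightarrow> h t > 0"
  and cross: "\<And>t. 0 < t \<Longrightarrow> t < Y \<Longrightarrow> h t = 0 \<Longrightarrow> h' t > 0"
  shows "\<forall>t. 0 < t \<and> t < Y \<longrightarrow> h t > 0"
  using crossing0[OF assms] by blast



definition VV :: "real \<Rightarrow> real \<Rightarrow> real" where "VV nu t = -2 * t * G1 nu (t^2) / WW nu t"
definition QQ :: "real \<Rightarrow> real \<Rightarrow> real" where "QQ nu t = t + (t^2 + 1 - 2*nu) * VV nu t"
definition Rc :: "real \<Rightarrow> real \<Rightarrow> real \<Rightarrow> real" where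
  "Rc nu t v = 1 + (2*t - (2*nu+1)/t) * v + (t^2 + 1 - 2*nu) * v^2"
definition AA :: "real \<Rightarrow> real \<Rightarrow> real" where "AA nu t = -2 * G1 nu (t^2) / WW nu t"
definition BB :: "real \<Rightarrow> real \<Rightarrow> real" where "BB nu t = 1 + (t^2 + 1 - 2*nu) * AA nu t"

lemma WW_0: "WW nu 0 = 1" unfolding WW_def by (simp add: G0_0)

lemma VV_AA: "VV nu t = t * AA nu t" unfolding VV_def AA_def by simp
lemma QQ_BB: "QQ nu t = t * BB nu t" unfolding QQ_def BB_def VV_AA by (simp add: algebra_simps)

lemma G1_cont: "nu > -1 \<Longrightarrow> isCont (\<lambda>t. G1 nu (t^2)) t"
  using G1sq_deriv DERIV_isCont by blast

lemma AA_cont: "nu > -1 \<Longrightarrow> isCont (AA nu) 0"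
  unfolding AA_def
  by (intro continuous_intros G1_cont) (auto simp: WW_0 intro: DERIV_isCont WW_deriv)

lemma BB_cont: "nu > -1 \<Longrightarrow> isCont (BB nu) 0"
  unfolding BB_def by (intro continuous_intros AA_cont)

lemma AA_0: "nu > -1 \<Longrightarrow> AA nu 0 = 1 / (2 * (nu + 1))"
  unfolding AA_def by (simp add: WW_0 G1_0 field_simps)

lemma BB_0: "nu > -1 \<Longrightarrow> BB nu 0 = 3 / (2 * (nu + 1))"
  unfolding BB_def by (simp add: AA_0 field_simps)

lemma W1_QQ: "WW nu t \<noteq> 0 \<Longrightarrow> W1 nu t = - QQ nu t * WW nu t"
  unfolding QQ_def VV_def W1_def WW_def by (simp add: field_simps)

lemma VV_deriv:
  assumes "nu > -1" "t \<noteq> 0" "WW nu t \<noteq> 0"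
  shows "(VV nu has_real_derivative Rc nu t (VV nu t)) (at t)"
proof -
  have N: "((\<lambda>t. -2 * t * G1 nu (t^2)) has_real_derivative (-2 * t) * (G2 nu (t^2) * (2 * t)) + (-2) * G1 nu (t^2)) (at t)"
    by (rule DERIV_mult'[OF _ G1sq_deriv[OF assms(1)]]) (auto intro!: derivative_eq_intros)
  have D: "(VV nu has_real_derivative
      (((-2 * t) * (G2 nu (t^2) * (2 * t)) + (-2) * G1 nu (t^2)) * WW nu t - (-2 * t * G1 nu (t^2)) * W1 nu t) / (WW nu t * WW nu t)) (at t)"
    unfolding VV_def[abs_def] by (rule DERIV_divide[OF N WW_deriv[OF assms(1)] assms(3)])
  have o: "4 * t^2 * G2 nu (t^2) = - 4 * (nu + 1) * G1 nu (t^2) - G0 nu (t^2)"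
    using G_ode[OF assms(1), of "t^2"] by linarith
  have e1: "(-2 * t) * (G2 nu (t^2) * (2 * t)) + (-2) * G1 nu (t^2) = G0 nu (t^2) + (4*nu+2) * G1 nu (t^2)"
  proof -
    have "(-2 * t) * (G2 nu (t^2) * (2 * t)) + (-2) * G1 nu (t^2) = - (4 * t^2 * G2 nu (t^2)) - 2 * G1 nu (t^2)"
      by (simp add: algebra_simps power2_eq_square)
    thus ?thesis unfolding o by (simp add: algebra_simps)
  qed
  have w: "G0 nu (t^2) + 2 * t^2 * G1 nu (t^2) \<noteq> 0" using assms(3) unfolding WW_def .
  have "(((-2 * t) * (G2 nu (t^2) * (2 * t)) + (-2) * G1 nu (t^2)) * WW nu t - (-2 * t * G1 nu (t^2)) * W1 nu t) / (WW nu t * WW nu t)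
      = Rc nu t (VV nu t)"
    unfolding e1 unfolding WW_def W1_def Rc_def VV_def
    by (rule ric_alg[OF assms(2) w])
  with D show ?thesis by simp
qed

lemma QQ_deriv:
  assumes "nu > -1" "t \<noteq> 0" "WW nu t \<noteq> 0"
  shows "(QQ nu has_real_derivative 1 + 2 * t * VV nu t + (t^2 + 1 - 2*nu) * Rc nu t (VV nu t)) (at t)"
  unfolding QQ_def[abs_def]
  by (auto intro!: derivative_eq_intros VV_deriv[OF assms] simp: algebra_simps)


lemma ring_id: "(D::real) * (1 + p * v + D * v^2) = D + p * (D * v) + (D * v)^2"
  by (simp add: algebra_simps power2_eq_square)

lemma DRc: "(t^2 + 1 - 2*nu) * Rc nu t v = (t^2 + 1 - 2*nu) + (2*t - (2*nu+1)/t) * ((t^2 + 1 - 2*nu) * v) + ((t^2 + 1 - 2*nu) * v)^2"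
  unfolding Rc_def by (rule ring_id)

lemma VV_pos:
  assumes nu: "nu > -1" and Y: "Y > 0" and W: "\<And>t. 0 < t \<Longrightarrow> t < Y \<Longrightarrow> WW nu t \<noteq> 0"
  shows "\<forall>t. 0 < t \<and> t < Y \<longrightarrow> VV nu t > 0"
proof (rule crossing[OF Y, where h' = "\<lambda>t. Rc nu t (VV nu t)"])
  show "\<And>t. 0 < t \<Longrightarrow> t < Y \<Longrightarrow> (VV nu has_real_derivative Rc nu t (VV nu t)) (at t)"
    using VV_deriv[OF nu] W by simp
  show "\<exists>e>0. \<forall>t. 0 < t \<and> t < e \<longrightarrow> VV nu t > 0"
    unfolding VV_AA by (rule near_pos[OF AA_cont[OF nu]]) (use nu AA_0[OF nu] in simp)
  show "\<And>t. 0 < t \<Longrightarrow> t < Y \<Longrightarrow> VV nu t = 0 \<Longrightarrow> Rc nu t (VV nu t) > 0"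
    by (simp add: Rc_def)
qed

lemma VV_less:
  assumes nu: "nu > -1" and mu: "mu > nu" and Y: "Y > 0"
    and W: "\<And>t. 0 < t \<Longrightarrow> t < Y \<Longrightarrow> WW nu t \<noteq> 0"
    and Wm: "\<And>t. 0 < t \<Longrightarrow> t < Y \<Longrightarrow> WW mu t \<noteq> 0"
  shows "\<forall>t. 0 < t \<and> t < Y \<longrightarrow> VV nu t - VV mu t > 0"
proof (rule crossing[OF Y, where h' = "\<lambda>t. Rc nu t (VV nu t) - Rc mu t (VV mu t)"])
  have mu1: "mu > -1" using nu mu by linarith
  show "\<And>t. 0 < t \<Longrightarrow> t < Y \<Longrightarrow> ((\<lambda>t. VV nu t - VV mu t) has_real_derivative Rc nu t (VV nu t) - Rc mu t (VV mu t)) (at t)"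
    using VV_deriv[OF nu] VV_deriv[OF mu1] W Wm by (intro DERIV_diff) auto
  have eq: "(\<lambda>t. VV nu t - VV mu t) = (\<lambda>t. t * (AA nu t - AA mu t))" unfolding VV_AA by (simp add: algebra_simps)
  have pos: "AA nu 0 - AA mu 0 > 0" unfolding AA_0[OF nu] AA_0[OF mu1]
  proof -
    have "1 / (2 * (mu + 1)) < 1 / (2 * (nu + 1))" using nu mu by (intro divide_strict_left_mono) auto
    thus "1 / (2 * (nu + 1)) - 1 / (2 * (mu + 1)) > 0" by simp
  qed
  show "\<exists>e>0. \<forall>t. 0 < t \<and> t < e \<longrightarrow> VV nu t - VV mu t > 0"
    using near_pos[of "\<lambda>t. AA nu t - AA mu t", OF _ pos] AA_cont[OF nu] AA_cont[OF mu1]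
    unfolding VV_AA by (simp add: algebra_simps continuous_intros)
  show "Rc nu t (VV nu t) - Rc mu t (VV mu t) > 0" if t: "0 < t" "t < Y" and h: "VV nu t - VV mu t = 0" for t
  proof -
    have v: "VV nu t > 0" using VV_pos[OF nu Y W] t by blast
    have e: "VV mu t = VV nu t" using h by simp
    have "Rc nu t (VV nu t) - Rc mu t (VV mu t) = ((2*mu+1)/t - (2*nu+1)/t) * VV nu t + (2*mu - 2*nu) * (VV nu t)^2"
      unfolding e Rc_def by (simp add: algebra_simps)
    also have "(2*mu+1)/t - (2*nu+1)/t = 2 * (mu - nu) / t" by (simp add: diff_divide_distrib[symmetric] algebra_simps)
    also have "2 * (mu - nu) / t * VV nu t + (2*mu - 2*nu) * (VV nu t)^2 > 0"
    proof -
      have "2 * (mu - nu) / t * VV nu t > 0" using mu v t by simp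
      moreover have "(2*mu - 2*nu) * (VV nu t)^2 > 0" using mu v by simp
      ultimately show ?thesis by linarith
    qed
    finally show ?thesis .
  qed
qed

lemma QQ_pos:
  assumes nu: "nu > -1" and Y: "Y > 0" and W: "\<And>t. 0 < t \<Longrightarrow> t < Y \<Longrightarrow> WW nu t \<noteq> 0"
  shows "\<forall>t. 0 < t \<and> t < Y \<longrightarrow> QQ nu t > 0"
proof (rule crossing[OF Y, where h' = "\<lambda>t. 1 + 2 * t * VV nu t + (t^2 + 1 - 2*nu) * Rc nu t (VV nu t)"])
  show "\<And>t. 0 < t \<Longrightarrow> t < Y \<Longrightarrow> (QQ nu has_real_derivative 1 + 2 * t * VV nu t + (t^2 + 1 - 2*nu) * Rc nu t (VV nu t)) (at t)"
    using QQ_deriv[OF nu] W by simp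
  show "\<exists>e>0. \<forall>t. 0 < t \<and> t < e \<longrightarrow> QQ nu t > 0"
    unfolding QQ_BB by (rule near_pos[OF BB_cont[OF nu]]) (use nu BB_0[OF nu] in simp)
  show "1 + 2 * t * VV nu t + (t^2 + 1 - 2*nu) * Rc nu t (VV nu t) > 0" if t: "0 < t" "t < Y" and h: "QQ nu t = 0" for t
  proof -
    have v: "VV nu t > 0" using VV_pos[OF nu Y W] t by blast
    have c: "(t^2 + 1 - 2*nu) * VV nu t = - t" using h unfolding QQ_def by linarith
    have "(t^2 + 1 - 2*nu) * Rc nu t (VV nu t) = 2"
      unfolding DRc c using t by (simp add: field_simps power2_eq_square)
    moreover have "2 * t * VV nu t > 0" using v t by simp
    ultimately show ?thesis by linarith
  qed
qed

lemma QQ_less: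
  assumes nu: "nu > -1" and mu: "mu > nu" and Y: "Y > 0"
    and W: "\<And>t. 0 < t \<Longrightarrow> t < Y \<Longrightarrow> WW nu t \<noteq> 0"
    and Wm: "\<And>t. 0 < t \<Longrightarrow> t < Y \<Longrightarrow> WW mu t \<noteq> 0"
  shows "\<forall>t. 0 < t \<and> t < Y \<longrightarrow> QQ nu t - QQ mu t > 0"
proof (rule crossing[OF Y, where h' = "\<lambda>t. (1 + 2 * t * VV nu t + (t^2 + 1 - 2*nu) * Rc nu t (VV nu t)) - (1 + 2 * t * VV mu t + (t^2 + 1 - 2*mu) * Rc mu t (VV mu t))"])
  have mu1: "mu > -1" using nu mu by linarith
  show "\<And>t. 0 < t \<Longrightarrow> t < Y \<Longrightarrow> ((\<lambda>t. QQ nu t - QQ mu t) has_real_derivative (1 + 2 * t * VV nu t + (t^2 + 1 - 2*nu) * Rc nu t (VV nu t)) - (1 + 2 * t * VV mu t + (t^2 + 1 - 2*mu) * Rc mu t (VV mu t))) (at t)"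
    using QQ_deriv[OF nu] QQ_deriv[OF mu1] W Wm by (intro DERIV_diff) auto
  have pos: "BB nu 0 - BB mu 0 > 0" unfolding BB_0[OF nu] BB_0[OF mu1]
  proof -
    have "3 / (2 * (mu + 1)) < 3 / (2 * (nu + 1))" using nu mu by (intro divide_strict_left_mono) auto
    thus "3 / (2 * (nu + 1)) - 3 / (2 * (mu + 1)) > 0" by simp
  qed
  show "\<exists>e>0. \<forall>t. 0 < t \<and> t < e \<longrightarrow> QQ nu t - QQ mu t > 0"
    using near_pos[of "\<lambda>t. BB nu t - BB mu t", OF _ pos] BB_cont[OF nu] BB_cont[OF mu1]
    unfolding QQ_BB by (simp add: algebra_simps continuous_intros)
  show "(1 + 2 * t * VV nu t + (t^2 + 1 - 2*nu) * Rc nu t (VV nu t)) - (1 + 2 * t * VV mu t + (t^2 + 1 - 2*mu) * Rc mu t (VV mu t)) > 0"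
    if t: "0 < t" "t < Y" and h: "QQ nu t - QQ mu t = 0" for t
  proof -
    have vd: "VV nu t - VV mu t > 0" using VV_less[OF nu mu Y W Wm] t by blast
    have q: "QQ nu t > 0" using QQ_pos[OF nu Y W] t by blast
    define c where "c = (t^2 + 1 - 2*nu) * VV nu t"
    have cn: "(t^2 + 1 - 2*nu) * VV nu t = c" unfolding c_def ..
    have cm: "(t^2 + 1 - 2*mu) * VV mu t = c" using h unfolding QQ_def c_def by linarith
    have qc: "QQ nu t = t + c" unfolding QQ_def c_def ..
    have "(1 + 2 * t * VV nu t + (t^2 + 1 - 2*nu) * Rc nu t (VV nu t)) - (1 + 2 * t * VV mu t + (t^2 + 1 - 2*mu) * Rc mu t (VV mu t))
        = 2 * t * (VV nu t - VV mu t) + 2 * (mu - nu) * ((t + c) / t)"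
      unfolding DRc cn cm using t by (simp add: field_simps)
    also have "\<dots> > 0"
    proof -
      have a: "(t + c) / t > 0" using q t unfolding qc by simp
      have b: "2 * (mu - nu) * ((t + c) / t) > 0" using a mu by (intro mult_pos_pos) auto
      have "2 * t * (VV nu t - VV mu t) > 0" using vd t by simp
      thus ?thesis using b by linarith
    qed
    finally show ?thesis .
  qed
qed



lemma ratio_mono:
  assumes nu: "nu > -1" and mu: "mu > nu" and Y: "Y > 0"
    and Wn: "\<And>t. 0 \<le> t \<Longrightarrow> t < Y \<Longrightarrow> WW nu t > 0"
    and Wm: "\<And>t. 0 \<le> t \<Longrightarrow> t < Y \<Longrightarrow> WW mu t > 0"
    and ab: "0 \<le> a" "a \<le> b" "b < Y"
  shows "WW mu a / WW nu a \<le> WW mu b / WW nu b"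
proof (rule DERIV_nonneg_imp_increasing_open[OF ab(2)])
  have mu1: "mu > -1" using nu mu by linarith
  have Qlt: "\<forall>t. 0 < t \<and> t < Y \<longrightarrow> QQ nu t - QQ mu t > 0"
    using QQ_less[OF nu mu Y] Wn Wm by (metis less_eq_real_def less_irrefl)
  show "\<exists>y. ((\<lambda>t. WW mu t / WW nu t) has_real_derivative y) (at x) \<and> y \<ge> 0" if x: "a < x" "x < b" for x
  proof -
    have x0: "0 < x" "x < Y" using x ab by linarith+
    have wn: "WW nu x > 0" and wm: "WW mu x > 0" using Wn Wm x0 by auto
    have D: "((\<lambda>t. WW mu t / WW nu t) has_real_derivative
        (W1 mu x * WW nu x - WW mu x * W1 nu x) / (WW nu x * WW nu x)) (at x)"
      by (rule DERIV_divide[OF WW_deriv[OF mu1] WW_deriv[OF nu]]) (use wn in simp)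
    have "W1 mu x * WW nu x - WW mu x * W1 nu x = WW mu x * WW nu x * (QQ nu x - QQ mu x)"
    proof -
      have "W1 mu x = - QQ mu x * WW mu x" "W1 nu x = - QQ nu x * WW nu x" using W1_QQ wn wm by auto
      thus ?thesis by (simp add: algebra_simps)
    qed
    moreover have "WW mu x * WW nu x * (QQ nu x - QQ mu x) > 0" using wn wm Qlt x0 by simp
    ultimately have "(W1 mu x * WW nu x - WW mu x * W1 nu x) / (WW nu x * WW nu x) \<ge> 0"
      using wn by (intro divide_nonneg_pos) auto
    with D show ?thesis by blast
  qed
  show "continuous_on {a..b} (\<lambda>t. WW mu t / WW nu t)"
  proof (rule continuous_at_imp_continuous_on, rule ballI)
    fix t assume "t \<in> {a..b}"
    hence t: "0 \<le> t" "t < Y" using ab by auto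
    show "isCont (\<lambda>t. WW mu t / WW nu t) t"
      using Wn[OF t] by (intro continuous_intros DERIV_isCont[OF WW_deriv[OF mu1]] DERIV_isCont[OF WW_deriv[OF nu]]) auto
  qed
qed

lemma W_main:
  assumes nu: "nu > -1" and mu: "mu > nu" and X: "X > 0"
    and Wn: "\<And>t. 0 \<le> t \<Longrightarrow> t < X \<Longrightarrow> WW nu t > 0"
  shows "\<And>t. 0 \<le> t \<Longrightarrow> t < X \<Longrightarrow> WW mu t > 0"
proof (rule ccontr)
  have mu1: "mu > -1" using nu mu by linarith
  fix t1 assume t1: "0 \<le> t1" "t1 < X" "\<not> WW mu t1 > 0"
  define S where "S = {t. 0 \<le> t \<and> t \<le> t1 \<and> WW mu t \<le> 0}"
  have ne: "S \<noteq> {}" using t1 unfolding S_def by auto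
  have bdd: "bdd_below S" unfolding S_def by (rule bdd_belowI[of _ 0]) auto
  have cl: "closed S"
  proof -
    have "S = {0..t1} \<inter> {t. WW mu t \<le> 0}" unfolding S_def by auto
    moreover have "closed {t. WW mu t \<le> 0}"
      by (rule closed_Collect_le) (auto intro: WW_cont[OF mu1] continuous_intros)
    ultimately show ?thesis by auto
  qed
  define s where "s = Inf S"
  have sS: "s \<in> S" unfolding s_def by (rule closed_contains_Inf[OF ne bdd cl])
  hence s: "0 \<le> s" "s \<le> t1" "WW mu s \<le> 0" unfolding S_def by auto
  have s0: "s \<noteq> 0" using s(3) WW_0[of mu] by auto
  hence spos: "s > 0" using s by simp
  have below: "WW mu t > 0" if "0 \<le> t" "t < s" for t
  proof (rule ccontr)
    assume "\<not> WW mu t > 0"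
    hence "t \<in> S" using that s unfolding S_def by auto
    hence "s \<le> t" unfolding s_def using cInf_lower bdd by blast
    with that show False by simp
  qed
  have sX: "s < X" using s t1 by linarith
  have ge: "WW mu t \<ge> WW nu t" if "0 \<le> t" "t < s" for t
  proof -
    have "WW mu 0 / WW nu 0 \<le> WW mu t / WW nu t"
      by (rule ratio_mono[OF nu mu spos _ _ order.refl that(1) that(2)])
         (use Wn sX below in auto)
    hence "1 \<le> WW mu t / WW nu t" by (simp add: WW_0)
    moreover have "WW nu t > 0" using Wn that sX by simp
    ultimately show ?thesis by (simp add: field_simps)
  qed
  have wns: "WW nu s > 0" using Wn s sX by simp
  let ?g = "\<lambda>t. WW mu t - WW nu t"
  have cont: "isCont ?g s" by (intro continuous_intros DERIV_isCont[OF WW_deriv[OF mu1]] DERIV_isCont[OF WW_deriv[OF nu]])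
  have gs: "?g s < 0" using s(3) wns by simp
  obtain d where d: "d > 0" "\<And>x. dist x s < d \<Longrightarrow> dist (?g x) (?g s) < - ?g s"
    using cont gs unfolding continuous_at_eps_delta by (metis neg_0_less_iff_less)
  define t where "t = s - min d s / 2"
  have "0 < t" "t < s" using d spos unfolding t_def by auto
  moreover have "dist t s < d" using d spos unfolding t_def by (simp add: dist_real_def)
  hence "?g t < 0" using d(2)[of t] gs by (simp add: dist_real_def abs_less_iff)
  ultimately show False using ge[of t] by linarith
qed


lemma KK_pos: "nu > -1 \<Longrightarrow> KK nu > 0"
  unfolding KK_def by simp

lemma dini_norm:
  assumes "nu > -1" "x > 0"
  shows "2 powr nu * Gamma (nu + 1) * x powr (-nu) * dini nu x = WW nu x"
proof -
  have g: "Gamma (nu + 1) > 0" using assms by simp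
  have p: "x powr (-nu) * x powr nu = 1" using assms by (simp add: powr_minus field_simps)
  have "2 powr nu * Gamma (nu + 1) * x powr (-nu) * dini nu x
      = (2 powr nu * Gamma (nu + 1) * KK nu) * (x powr (-nu) * x powr nu) * WW nu x"
    unfolding dini_eq[OF assms] by (simp add: algebra_simps)
  also have "\<dots> = WW nu x" unfolding p KK_def using g by simp
  finally show ?thesis .
qed

lemma dini_nonzero:
  assumes "0 < t" "t < dini_zero1 nu"
  shows "dini nu t \<noteq> 0"
proof
  assume "dini nu t = 0"
  hence "t \<in> {x. 0 < x \<and> dini nu x = 0}" using assms by simp
  moreover have "bdd_below {x. 0 < x \<and> dini nu x = 0}" by (rule bdd_belowI[of _ 0]) auto
  ultimately have "dini_zero1 nu \<le> t" unfolding dini_zero1_def by (rule cInf_lower)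
  with assms show False by simp
qed

lemma WW_pos_int:
  assumes nu: "nu > -1" and t: "0 \<le> t" "t < dini_zero1 nu"
  shows "WW nu t > 0"
proof (rule ccontr)
  assume "\<not> WW nu t > 0"
  hence "WW nu t \<le> 0" by simp
  then obtain z where z: "0 \<le> z" "z \<le> t" "WW nu z = 0"
    using IVT2[of "WW nu" t 0 0] t WW_0[of nu] DERIV_isCont[OF WW_deriv[OF nu]] by auto
  have "z \<noteq> 0" using z WW_0[of nu] by auto
  hence zp: "z > 0" using z by simp
  have "dini nu z = 0" unfolding dini_eq[OF nu zp] z by simp
  moreover have "dini nu z \<noteq> 0" using dini_nonzero zp z t by (meson le_less_trans)
  ultimately show False by simp
qed

lemma logderiv:
  assumes nu: "nu > -1" and x: "x > 0" and w: "WW nu x \<noteq> 0"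
  shows "deriv (dini nu) x / dini nu x = nu / x - QQ nu x"
proof -
  have k: "KK nu \<noteq> 0" using KK_pos[OF nu] by simp
  have p: "x powr (nu - 1) = x powr nu / x" using x by (simp add: powr_diff)
  have xp: "x powr nu > 0" using x by simp
  show ?thesis
    unfolding dini_deriv[OF nu x] dini_eq[OF nu x] W1_QQ[OF w] p
    using k xp x w by (simp add: field_simps)
qed

lemma ratio_eq:
  assumes nu: "nu > -1" and mu: "mu > -1" and t: "t > 0" and w: "WW nu t \<noteq> 0"
  shows "dini mu t / dini nu t = (KK mu / KK nu) * t powr (mu - nu) * (WW mu t / WW nu t)"
proof -
  have k: "KK nu > 0" "KK mu > 0" using KK_pos nu mu by auto
  have p: "t powr (mu - nu) = t powr mu / t powr nu" using t by (simp add: powr_diff)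
  have xp: "t powr nu > 0" using t by simp
  show ?thesis unfolding dini_eq[OF nu t] dini_eq[OF mu t] p using k xp w by (simp add: field_simps)
qed

lemma KK_ratio:
  assumes nu: "nu > -1" and mu: "mu > -1"
  shows "KK mu / KK nu = 2 powr (nu - mu) * (Gamma (nu + 1) / Gamma (mu + 1))"
proof -
  have g: "Gamma (nu + 1) > 0" "Gamma (mu + 1) > 0" using nu mu by auto
  show ?thesis unfolding KK_def using g by (simp add: powr_diff field_simps)
qed

theorem theorem6:
  fixes mu nu x :: real
  assumes "nu > -1" and "mu \<ge> nu"
    and "0 < x" and "x < dini_zero1 nu"
  shows "(2 powr mu * Gamma (mu + 1) * x powr (-mu) * dini mu x
           \<ge> 2 powr nu * Gamma (nu + 1) * x powr (-nu) * dini nu x)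
    \<and> (x powr (nu - mu) * (dini mu x / dini nu x) \<ge> 2 powr (nu - mu) * (Gamma (nu + 1) / Gamma (mu + 1)))
    \<and> (deriv (dini mu) x / dini mu x \<ge> deriv (dini nu) x / dini nu x)
    \<and> mono_on {0<..<dini_zero1 nu} (\<lambda>t. dini mu t / dini nu t)"
proof (cases "mu = nu")
  case True
  have dn: "dini nu x \<noteq> 0" using dini_nonzero assms by blast
  have m: "mono_on {0<..<dini_zero1 nu} (\<lambda>t. dini nu t / dini nu t)"
  proof (rule mono_onI)
    fix r s assume "r \<in> {0<..<dini_zero1 nu}" "s \<in> {0<..<dini_zero1 nu}" "r \<le> s"
    hence "dini nu r \<noteq> 0" "dini nu s \<noteq> 0" using dini_nonzero by auto
    thus "dini nu r / dini nu r \<le> dini nu s / dini nu s" by simp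
  qed
  show ?thesis unfolding True using dn m assms by simp
next
  case False
  have nu: "nu > -1" using assms by simp
  have mu: "mu > nu" using False assms by simp
  have mu1: "mu > -1" using nu mu by linarith
  define al where "al = dini_zero1 nu"
  have x: "0 < x" "x < al" using assms unfolding al_def by auto
  have al0: "al > 0" using x by linarith
  have Wn: "\<And>t. 0 \<le> t \<Longrightarrow> t < al \<Longrightarrow> WW nu t > 0" using WW_pos_int[OF nu] unfolding al_def by blast
  have Wm: "\<And>t. 0 \<le> t \<Longrightarrow> t < al \<Longrightarrow> WW mu t > 0" using W_main[OF nu mu al0 Wn] by blast
  have rm: "\<And>a b. 0 \<le> a \<Longrightarrow> a \<le> b \<Longrightarrow> b < al \<Longrightarrow> WW mu a / WW nu a \<le> WW mu b / WW nu b"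
    by (rule ratio_mono[OF nu mu al0 Wn Wm]) auto
  have wnx: "WW nu x > 0" and wmx: "WW mu x > 0" using Wn Wm x by auto
  have r1: "1 \<le> WW mu x / WW nu x" using rm[of 0 x] x by (simp add: WW_0)
  have c1: "WW mu x \<ge> WW nu x" using r1 wnx by (simp add: field_simps)
  have C1: "2 powr mu * Gamma (mu + 1) * x powr (-mu) * dini mu x \<ge> 2 powr nu * Gamma (nu + 1) * x powr (-nu) * dini nu x"
    unfolding dini_norm[OF nu x(1)] dini_norm[OF mu1 x(1)] using c1 .
  have cpos: "2 powr (nu - mu) * (Gamma (nu + 1) / Gamma (mu + 1)) > 0" using nu mu1 by simp
  have C2: "x powr (nu - mu) * (dini mu x / dini nu x) \<ge> 2 powr (nu - mu) * (Gamma (nu + 1) / Gamma (mu + 1))"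
  proof -
    have "x powr (nu - mu) * (dini mu x / dini nu x)
        = (x powr (nu - mu) * x powr (mu - nu)) * (KK mu / KK nu) * (WW mu x / WW nu x)"
    proof -
      have re: "dini mu x / dini nu x = (KK mu / KK nu) * x powr (mu - nu) * (WW mu x / WW nu x)"
        using ratio_eq[OF nu mu1 x(1)] wnx by simp
      show ?thesis unfolding re by (simp add: algebra_simps)
    qed
    also have "x powr (nu - mu) * x powr (mu - nu) = 1" using x by (simp add: powr_add[symmetric])
    finally have "x powr (nu - mu) * (dini mu x / dini nu x) = 2 powr (nu - mu) * (Gamma (nu + 1) / Gamma (mu + 1)) * (WW mu x / WW nu x)"
      unfolding KK_ratio[OF nu mu1] by simp
    moreover have "2 powr (nu - mu) * (Gamma (nu + 1) / Gamma (mu + 1)) * 1 \<le> 2 powr (nu - mu) * (Gamma (nu + 1) / Gamma (mu + 1)) * (WW mu x / WW nu x)"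
      using cpos r1 by (intro mult_left_mono) auto
    ultimately show ?thesis by simp
  qed
  have C3: "deriv (dini mu) x / dini mu x \<ge> deriv (dini nu) x / dini nu x"
  proof -
    have qa: "\<forall>t. 0 < t \<and> t < al \<longrightarrow> QQ nu t - QQ mu t > 0"
    proof (rule QQ_less[OF nu mu al0])
      fix t assume t: "0 < t" "t < al"
      show "WW nu t \<noteq> 0" using Wn[of t] t by simp
      show "WW mu t \<noteq> 0" using Wm[of t] t by simp
    qed
    have q: "QQ nu x - QQ mu x > 0" using qa x by blast
    have "nu / x \<le> mu / x" using mu x by (simp add: divide_right_mono)
    moreover have "deriv (dini nu) x / dini nu x = nu / x - QQ nu x" using logderiv[OF nu x(1)] wnx by simp
    moreover have "deriv (dini mu) x / dini mu x = mu / x - QQ mu x" using logderiv[OF mu1 x(1)] wmx by simp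
    ultimately show ?thesis using q by linarith
  qed
  have C4: "mono_on {0<..<al} (\<lambda>t. dini mu t / dini nu t)"
  proof (rule mono_onI)
    fix r s assume rs: "r \<in> {0<..<al}" "s \<in> {0<..<al}" "r \<le> s"
    have wr: "WW nu r > 0" "WW mu r > 0" "WW nu s > 0" "WW mu s > 0" using Wn Wm rs by auto
    have k: "KK mu / KK nu > 0" using KK_pos nu mu1 by simp
    have pm: "r powr (mu - nu) \<le> s powr (mu - nu)" using rs mu by (intro powr_mono2) auto
    have rr: "WW mu r / WW nu r \<le> WW mu s / WW nu s" using rm rs by auto
    have "r powr (mu - nu) * (WW mu r / WW nu r) \<le> s powr (mu - nu) * (WW mu s / WW nu s)"
      using pm rr wr by (intro mult_mono) auto
    hence "(KK mu / KK nu) * (r powr (mu - nu) * (WW mu r / WW nu r)) \<le> (KK mu / KK nu) * (s powr (mu - nu) * (WW mu s / WW nu s))"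
      using k by (intro mult_left_mono) auto
    thus "dini mu r / dini nu r \<le> dini mu s / dini nu s"
      unfolding ratio_eq[OF nu mu1 _ ] using rs wr by (simp add: ratio_eq[OF nu mu1] mult.assoc)
  qed
  show ?thesis using C1 C2 C3 C4 unfolding al_def by blast
qed


end
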